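(* Let $K\ge 1$ and, for $k=1,\dots,K$, let $a_k>0$, $b_k>0$, $P_{L,k}>0$, and let $\gamma_{\mathrm{out}}>0$. Let $Z_1,\dots,Z_K$ be independent, with $Z_k$ gamma distributed with shape $a_k$ and scale $b_k$ (the moment-matched gamma approximation described in the context), and for $\bar{\gamma}>0$ set $\gamma_k=\frac{\bar{\gamma}}{P_{L,k}}Z_k^2$, $\gamma^*=\max_k\gamma_k$, and $P_{out}(\bar{\gamma})=\Pr[\gamma^*\le\gamma_{\mathrm{out}}]$. Define $$P_{out}^{\infty}(\bar{\gamma})=\prod_{k=1}^{K}\left(\frac{b_k^2}{\gamma_{\mathrm{out}}\,(a_k!)^{-\frac{2}{a_k}}\,P_{L,k}}\,\bar{\gamma}\right)^{-\frac{a_k}{2}},$$ where $a_k!:=\Gamma(a_k+1)$. Then $P_{out}(\bar{\gamma})$ behaves as $P_{out}^{\infty}(\bar{\gamma})$ as $\bar{\gamma}\to\infty$, i.e. $P_{out}(\bar{\gamma})/P_{out}^{\infty}(\bar{\gamma})\to 1$.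
   Context: Model: there are $K$ reflecting surfaces; surface $k$ has $N_k$ elements with mutually independent amplitudes $\alpha_k^{(i)}$ (Nakagami-$m$, shape $m_{k,1}$, spread $\Omega_{k,1}$) and $\beta_k^{(i)}$ (Nakagami-$m$, shape $m_{k,2}$, spread $\Omega_{k,2}$), and $a_k=N_k\mu_k^2/\sigma_k^2$, $b_k=\sigma_k^2/\mu_k$, where $\mu_k,\sigma_k^2$ are the mean and variance of $\alpha_k^{(1)}\beta_k^{(1)}$; the distribution of $\sum_{i=1}^{N_k}\alpha_k^{(i)}\beta_k^{(i)}$ is approximated by the gamma law with shape $a_k$, scale $b_k$. $P_{L,k}$ is the path loss of path $k$, $\bar{\gamma}$ the average SNR, $\gamma_{\mathrm{out}}$ the outage threshold. *)

theory Defs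
  imports "HOL-Probability.Probability"
begin

definition gamma_density :: "real \<Rightarrow> real \<Rightarrow> real \<Rightarrow> real" where
  "gamma_density a b x =
     (if x > 0 then x powr (a - 1) * exp (- x / b) / (Gamma a * b powr a) else 0)"

definition Pout_inf ::
  "nat \<Rightarrow> (nat \<Rightarrow> real) \<Rightarrow> (nat \<Rightarrow> real) \<Rightarrow> (nat \<Rightarrow> real) \<Rightarrow> real \<Rightarrow> real \<Rightarrow> real" where
  "Pout_inf K a b PL gout g =
     (\<Prod>k\<in>{1..K}. (b k ^ 2 / (gout * (Gamma (a k + 1)) powr (- 2 / a k) * PL k) * g)
        powr (- a k / 2))"

definition Pout ::
  "'w measure \<Rightarrow> nat \<Rightarrow> (nat \<Rightarrow> 'w \<Rightarrow> real) \<Rightarrow> (nat \<Rightarrow> real) \<Rightarrow> real \<Rightarrow> real \<Rightarrow> real" where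
  "Pout M K Z PL gout g =
     measure M {\<omega> \<in> space M. Max ((\<lambda>k. g / PL k * (Z k \<omega>)\<^sup>2) ` {1..K}) \<le> gout}"

end

theory Submission
  imports Defs
begin

lemma int_powr:
  assumes a: "a > 0" and t: "t > 0" and that: "c \<ge> 0"
  shows "(\<integral>\<^sup>+x. ennreal (c * (x powr (a - 1) * indicator {0..t} x)) \<partial>lborel) = ennreal (c * (t powr a / a))"
proof -
  have "((\<lambda>x. x powr (a - 1)) has_integral (t powr (a - 1 + 1) / (a - 1 + 1))) {0..t}"
    by (rule has_integral_powr_from_0) (use a t in auto)
  hence "((\<lambda>x. x powr (a - 1)) has_integral (t powr a / a)) {0..t}" by simp
  hence "((\<lambda>x. c * x powr (a - 1)) has_integral (c * (t powr a / a))) {0..t}"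
    by (rule has_integral_mult_right)
  hence "((\<lambda>x. if x \<in> {0..t} then c * x powr (a - 1) else 0) has_integral (c * (t powr a / a))) UNIV"
    by (subst has_integral_restrict_UNIV)
  hence h: "((\<lambda>x. c * (x powr (a - 1) * indicator {0..t} x)) has_integral (c * (t powr a / a))) UNIV"
    by (rule has_integral_eq[rotated]) (auto simp: indicator_def)
  show ?thesis
    by (rule nn_integral_has_integral_lborel[OF _ _ h]) (use that in auto)
qed


lemma single_bounds:
  assumes P: "prob_space M" and D: "distributed M lborel X (\<lambda>x. ennreal (gamma_density a b x))"
    and a: "a > 0" and b: "b > 0" and t: "t > 0"
  shows "exp (- t / b) * (t powr a / (Gamma (a + 1) * b powr a)) \<le> measure M (X -` {-t..t} \<inter> space M)"
    and "measure M (X -` {-t..t} \<inter> space M) \<le> t powr a / (Gamma (a + 1) * b powr a)"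
proof -
  interpret prob_space M by fact
  define C where "C = 1 / (Gamma a * b powr a)"
  have C: "C > 0" using a b by (simp add: C_def Gamma_real_pos)
  have GA: "Gamma (a + 1) = a * Gamma a" using a by (intro Gamma_plus1) (auto elim!: nonpos_Ints_cases)
  have E: "ennreal (measure M (X -` {-t..t} \<inter> space M)) =
      (\<integral>\<^sup>+x. ennreal (gamma_density a b x) * indicator {-t..t} x \<partial>lborel)"
    using distributed_emeasure[OF D, of "{-t..t}"] by (simp add: emeasure_eq_measure)
  have up: "ennreal (gamma_density a b x) * indicator {-t..t} x \<le> ennreal (C * (x powr (a - 1) * indicator {0..t} x))" for x
  proof (cases "x > 0")
    case True
    have "exp (- x / b) \<le> 1" using True b by simp
    hence "x powr (a - 1) * exp (- x / b) \<le> x powr (a - 1)"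
      using True by (simp add: mult_left_le)
    hence "gamma_density a b x \<le> C * x powr (a - 1)"
      using True C by (simp add: gamma_density_def C_def divide_right_mono)
    then show ?thesis using True
      by (auto simp: indicator_def intro: ennreal_leI)
  qed (auto simp: gamma_density_def indicator_def)
  have lo: "ennreal (exp (- t / b) * C * (x powr (a - 1) * indicator {0..t} x)) \<le> ennreal (gamma_density a b x) * indicator {-t..t} x" for x
  proof (cases "x > 0 \<and> x \<le> t")
    case True
    have "exp (- t / b) \<le> exp (- x / b)" using True b by (simp add: divide_right_mono)
    hence "x powr (a - 1) * exp (- t / b) \<le> x powr (a - 1) * exp (- x / b)"
      using True by (simp add: mult_left_mono)
    hence "exp (- t / b) * C * x powr (a - 1) \<le> gamma_density a b x"
      using True C by (simp add: gamma_density_def C_def divide_right_mono mult.commute mult.left_commute)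
    then show ?thesis using True
      by (auto simp: indicator_def intro: ennreal_leI)
  next
    case False
    then show ?thesis using t
      by (cases "x > 0") (auto simp: indicator_def)
  qed
  have "ennreal (measure M (X -` {-t..t} \<inter> space M)) \<le> (\<integral>\<^sup>+x. ennreal (C * (x powr (a - 1) * indicator {0..t} x)) \<partial>lborel)"
    unfolding E by (rule nn_integral_mono) (rule up)
  also have "\<dots> = ennreal (C * (t powr a / a))"
    by (rule int_powr) (use a t C in auto)
  finally have "measure M (X -` {-t..t} \<inter> space M) \<le> C * (t powr a / a)"
    using C a t by (subst (asm) ennreal_le_iff) auto
  thus "measure M (X -` {-t..t} \<inter> space M) \<le> t powr a / (Gamma (a + 1) * b powr a)"
    by (simp add: C_def GA mult_ac)
  have "ennreal (exp (- t / b) * C * (t powr a / a)) = (\<integral>\<^sup>+x. ennreal (exp (- t / b) * C * (x powr (a - 1) * indicator {0..t} x)) \<partial>lborel)"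
    by (rule int_powr[symmetric]) (use a t C in auto)
  also have "\<dots> \<le> ennreal (measure M (X -` {-t..t} \<inter> space M))"
    unfolding E by (rule nn_integral_mono) (rule lo)
  finally have "exp (- t / b) * C * (t powr a / a) \<le> measure M (X -` {-t..t} \<inter> space M)"
    by (subst (asm) ennreal_le_iff) auto
  thus "exp (- t / b) * (t powr a / (Gamma (a + 1) * b powr a)) \<le> measure M (X -` {-t..t} \<inter> space M)"
    by (simp add: C_def GA mult_ac)
qed


lemma factor_eq:
  fixes a b PL gout g G :: real
  assumes "a > 0" "b > 0" "PL > 0" "gout > 0" "g > 0" "G > 0"
  shows "(b ^ 2 / (gout * G powr (- 2 / a) * PL) * g) powr (- a / 2)
         = sqrt (gout * PL / g) powr a / (G * b powr a)"
proof -
  have e: "(a * (ln G * 4) + a * (a * (ln b * 4))) / (a * 4) = ln G + a * ln b"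
    using assms by (simp add: field_simps)
  have "G * exp (a * ln b) = exp ((a * (ln G * 4) + a * (a * (ln b * 4))) / (a * 4))"
    unfolding e using assms by (simp add: exp_add)
  thus ?thesis
    using assms
    by (simp add: powr_def ln_mult ln_div ln_sqrt ln_powr ln_realpow exp_diff exp_add
       field_simps exp_minus flip: exp_add)
qed


theorem corollary1:
  fixes M :: "'w measure" and K :: nat
    and a b PL :: "nat \<Rightarrow> real" and gout :: real and Z :: "nat \<Rightarrow> 'w \<Rightarrow> real"
  assumes "prob_space M"
    and "K \<ge> 1"
    and "\<And>k. k \<in> {1..K} \<Longrightarrow> a k > 0"
    and "\<And>k. k \<in> {1..K} \<Longrightarrow> b k > 0"
    and "\<And>k. k \<in> {1..K} \<Longrightarrow> PL k > 0"
    and "gout > 0"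
    and "prob_space.indep_vars M (\<lambda>_. borel) Z {1..K}"
    and "\<And>k. k \<in> {1..K} \<Longrightarrow>
           distributed M lborel (Z k) (\<lambda>x. ennreal (gamma_density (a k) (b k) x))"
  shows "((\<lambda>g. Pout M K Z PL gout g / Pout_inf K a b PL gout g) \<longlongrightarrow> 1) at_top"
proof -
  interpret prob_space M by fact
  define t where "t k g = sqrt (gout * PL k / g)" for k g
  define F where "F k s = measure M (Z k -` {-s..s} \<inter> space M)" for k s
  define H where "H k s = s powr a k / (Gamma (a k + 1) * b k powr a k)" for k s
  have tpos: "t k g > 0" if "k \<in> {1..K}" "g > 0" for k g
    using that assms(5,6) by (simp add: t_def)
  have Hpos: "H k s > 0" if "k \<in> {1..K}" "s > 0" for k s
  proof -
    have "a k > 0" "b k > 0" using that assms(3,4) by auto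
    hence "Gamma (a k + 1) > 0" by (intro Gamma_real_pos) auto
    thus ?thesis using \<open>b k > 0\<close> \<open>s > 0\<close> by (simp add: H_def)
  qed
  have eq: "\<forall>\<^sub>F g in at_top. (\<Prod>k\<in>{1..K}. F k (t k g) / H k (t k g)) =
       Pout M K Z PL gout g / Pout_inf K a b PL gout g"
    using eventually_gt_at_top[of "0::real"]
  proof eventually_elim
    case (elim g)
    have ne: "{1..K} \<noteq> {}" using assms(2) by auto
    have iff: "g / PL k * z\<^sup>2 \<le> gout \<longleftrightarrow> z \<in> {- t k g..t k g}" if k: "k \<in> {1..K}" for k z
    proof -
      have "g / PL k * z\<^sup>2 \<le> gout \<longleftrightarrow> z\<^sup>2 \<le> gout * PL k / g"
        using elim assms(5)[OF k] by (simp add: field_simps)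
      also have "\<dots> \<longleftrightarrow> sqrt (z\<^sup>2) \<le> t k g"
        unfolding t_def by (rule real_sqrt_le_iff[symmetric])
      also have "\<dots> \<longleftrightarrow> z \<in> {- t k g..t k g}" by auto
      finally show ?thesis .
    qed
    have S: "{\<omega> \<in> space M. Max ((\<lambda>k. g / PL k * (Z k \<omega>)\<^sup>2) ` {1..K}) \<le> gout}
        = (\<Inter>k\<in>{1..K}. Z k -` {- t k g..t k g} \<inter> space M)"
    proof -
      have iff2: "g * z\<^sup>2 / PL k \<le> gout \<longleftrightarrow> - t k g \<le> z \<and> z \<le> t k g" if k: "k \<in> {1..K}" for k z
        using iff[OF k, of z] by simp
      show ?thesis using ne by (auto simp: Max_le_iff iff2)
    qed
    have "Pout M K Z PL gout g = (\<Prod>k\<in>{1..K}. F k (t k g))"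
      unfolding Pout_def S F_def
      by (rule indep_varsD_finite[OF assms(7)]) (use ne in auto)
    moreover have "Pout_inf K a b PL gout g = (\<Prod>k\<in>{1..K}. H k (t k g))"
      unfolding Pout_inf_def H_def t_def
      by (rule prod.cong[OF refl], rule factor_eq) (use elim assms(3-6) in \<open>auto intro!: Gamma_real_pos simp: add_pos_pos\<close>)
    ultimately show ?case by (simp add: prod_dividef)
  qed
  have lim: "((\<lambda>g. F k (t k g) / H k (t k g)) \<longlongrightarrow> 1) at_top" if k: "k \<in> {1..K}" for k
  proof (rule tendsto_sandwich[of "\<lambda>g. exp (- t k g / b k)" _ _ "\<lambda>g. 1"])
    have "((\<lambda>g. gout * PL k / g) \<longlongrightarrow> 0) at_top"
      by (rule tendsto_divide_0[OF tendsto_const]) (rule filterlim_at_top_imp_at_infinity[OF filterlim_ident])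
    hence "((\<lambda>g. t k g) \<longlongrightarrow> 0) at_top"
      unfolding t_def using tendsto_real_sqrt by fastforce
    hence "((\<lambda>g. exp (- t k g / b k)) \<longlongrightarrow> exp (- 0 / b k)) at_top"
      by (intro tendsto_intros) (use assms(4)[OF k] in auto)
    thus "((\<lambda>g. exp (- t k g / b k)) \<longlongrightarrow> 1) at_top" by simp
    show "((\<lambda>g. 1) \<longlongrightarrow> 1) at_top" by simp
    show "\<forall>\<^sub>F g in at_top. exp (- t k g / b k) \<le> F k (t k g) / H k (t k g)"
      using eventually_gt_at_top[of "0::real"]
    proof eventually_elim
      case (elim g)
      have "exp (- t k g / b k) * H k (t k g) \<le> F k (t k g)"
        unfolding F_def H_def
        by (rule single_bounds(1)[OF assms(1) assms(8)[OF k]]) (use k elim assms(3,4) tpos in auto)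
      thus ?case using Hpos[OF k tpos[OF k elim]] by (simp add: field_simps)
    qed
    show "\<forall>\<^sub>F g in at_top. F k (t k g) / H k (t k g) \<le> 1"
      using eventually_gt_at_top[of "0::real"]
    proof eventually_elim
      case (elim g)
      have "F k (t k g) \<le> H k (t k g)"
        unfolding F_def H_def
        by (rule single_bounds(2)[OF assms(1) assms(8)[OF k]]) (use k elim assms(3,4) tpos in auto)
      thus ?case using Hpos[OF k tpos[OF k elim]] by (simp add: field_simps)
    qed
  qed
  have "((\<lambda>g. \<Prod>k\<in>{1..K}. F k (t k g) / H k (t k g)) \<longlongrightarrow> (\<Prod>k\<in>{1..K}. 1)) at_top"
    by (rule tendsto_prod) (rule lim)
  hence "((\<lambda>g. \<Prod>k\<in>{1..K}. F k (t k g) / H k (t k g)) \<longlongrightarrow> 1) at_top" by simp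
  thus ?thesis using eq by (rule Lim_transform_eventually)
qed

end
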